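(* For every sequence $(\xi_i)_{i\in\mathbb N}$ of terms in $\Lambda$, there exists $\phi\in\Lambda$ such that: (1) $\phi\underline i\succ\xi_i$ for every $i\in\mathbb N$; (2) for every $U\in\Lambda$ such that $U\phi\Vdash\bot$, there exists $k\in\mathbb N$ such that $U\psi\Vdash\bot$ for every $\psi\in\Lambda$ satisfying $\psi\underline i\succ\xi_i$ for every $i<k$.
   Context: Fix an integer $N\ge 0$. The set $\Lambda$ of terms is the smallest set containing the constants $B,C,I,K,W,cc,A$ and $p,q_0,\dots,q_N$, closed under application $(\xi)\eta$ (written $\xi\eta$), and containing, for each sequence $(\xi_i)_{i\in\mathbb N}$ of closed terms (no occurrence of $p,q_0,\dots,q_N$), a constant $\bigwedge_i\xi_i$ (injectively, well-founded). Stacks: finite sequences $t_0\cdot\ldots\cdot t_{n-1}\cdot\pi_0$ of terms, $\pi_0$ the empty stack; $\Pi$ the set of stacks. $\ell_t=((C)(B)CB)t$, $k_{\pi_0}=A$, $k_{t\cdot\pi}=(\ell_t)k_\pi$; $\sigma=(BW)(C)(B)BB$, $\underline0=(K)I$, $\underline{n+1}=(\sigma)\underline n$. Execution $\succ$: least preorder on $\Lambda\times\Pi$ with $(\xi)\eta\star\pi\succ\xi\star\eta\cdot\pi$; $B\star\xi\cdot\eta\cdot\zeta\cdot\pi\succ\xi\star(\eta)\zeta\cdot\pi$; $C\star\xi\cdot\eta\cdot\zeta\cdot\pi\succ\xi\star\zeta\cdot\eta\cdot\pi$; $I\star\xi\cdot\pi\succ\xi\star\pi$; $K\star\xi\cdot\eta\cdot\pi\succ\xi\star\pi$;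 $W\star\xi\cdot\eta\cdot\pi\succ\xi\star\eta\cdot\eta\cdot\pi$; $cc\star\xi\cdot\pi\succ\xi\star k_\pi\cdot\pi$; $A\star\xi\cdot\pi\succ\xi\star\pi_0$; $\bigwedge_i\xi_i\star\underline n\cdot\pi\succ\xi_n\star\pi$. For terms, $\xi\succ\eta$ means $\xi\star\pi\succ\eta\star\pi$ for every $\pi\in\Pi$. Pole $\perp\!\!\!\perp=\{\xi\star\pi:\exists\varpi,\ \xi\star\pi\succ p\star\varpi\}$. $\xi\Vdash\bot$ means $\xi\star\pi\in\perp\!\!\!\perp$ for every $\pi\in\Pi$. *)

theory Defs
  imports Main
begin

text \<open>Terms of \<Lambda>. The constructor Big f is the constant \<And>_i f i; well-formedness
  (all f i closed terms of \<Lambda>, and q_j only for j \<le> N) is imposed by wf_trm.\<close>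
datatype trm = cB | cC | cI | cK | cW | ccc | cA | cP | cQ nat
  | App trm trm | Big "nat \<Rightarrow> trm"

inductive closed_trm :: "trm \<Rightarrow> bool" where
  "closed_trm cB" | "closed_trm cC" | "closed_trm cI" | "closed_trm cK"
| "closed_trm cW" | "closed_trm ccc" | "closed_trm cA"
| "closed_trm s \<Longrightarrow> closed_trm t \<Longrightarrow> closed_trm (App s t)"
| "(\<And>i. closed_trm (f i)) \<Longrightarrow> closed_trm (Big f)"

inductive wf_trm :: "nat \<Rightarrow> trm \<Rightarrow> bool" for N :: nat where
  "wf_trm N cB" | "wf_trm N cC" | "wf_trm N cI" | "wf_trm N cK"
| "wf_trm N cW" | "wf_trm N ccc" | "wf_trm N cA" | "wf_trm N cP"
| "j \<le> N \<Longrightarrow> wf_trm N (cQ j)"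
| "wf_trm N s \<Longrightarrow> wf_trm N t \<Longrightarrow> wf_trm N (App s t)"
| "(\<And>i. wf_trm N (f i) \<and> closed_trm (f i)) \<Longrightarrow> wf_trm N (Big f)"

text \<open>Stacks are lists of terms (head = top); the empty list is \<pi>_0.\<close>
definition wf_stack :: "nat \<Rightarrow> trm list \<Rightarrow> bool" where
  "wf_stack N \<pi> \<longleftrightarrow> (\<forall>t\<in>set \<pi>. wf_trm N t)"

definition ell :: "trm \<Rightarrow> trm" where
  "ell t = App (App cC (App (App cB cC) cB)) t"

fun kont :: "trm list \<Rightarrow> trm" where
  "kont [] = cA"
| "kont (t # \<pi>) = App (ell t) (kont \<pi>)"

definition sigma :: trm where
  "sigma = App (App cB cW) (App cC (App (App cB cB) cB))"

fun num :: "nat \<Rightarrow> trm" where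
  "num 0 = App cK cI"
| "num (Suc n) = App sigma (num n)"

inductive step :: "trm \<times> trm list \<Rightarrow> trm \<times> trm list \<Rightarrow> bool" where
  push: "step (App s t, \<pi>) (s, t # \<pi>)"
| B: "step (cB, x # y # z # \<pi>) (x, App y z # \<pi>)"
| C: "step (cC, x # y # z # \<pi>) (x, z # y # \<pi>)"
| I: "step (cI, x # \<pi>) (x, \<pi>)"
| K: "step (cK, x # y # \<pi>) (x, \<pi>)"
| W: "step (cW, x # y # \<pi>) (x, y # y # \<pi>)"
| cc: "step (ccc, x # \<pi>) (x, kont \<pi> # \<pi>)"
| A: "step (cA, x # \<pi>) (x, [])"
| Big: "step (Big f, num n # \<pi>) (f n, \<pi>)"

abbreviation exec :: "trm \<times> trm list \<Rightarrow> trm \<times> trm list \<Rightarrow> bool" where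
  "exec \<equiv> step\<^sup>*\<^sup>*"

definition red_trm :: "nat \<Rightarrow> trm \<Rightarrow> trm \<Rightarrow> bool" where
  "red_trm N s t \<longleftrightarrow> (\<forall>\<pi>. wf_stack N \<pi> \<longrightarrow> exec (s, \<pi>) (t, \<pi>))"

definition in_pole :: "trm \<times> trm list \<Rightarrow> bool" where
  "in_pole c \<longleftrightarrow> (\<exists>\<rho>. exec c (cP, \<rho>))"

definition realizes_bot :: "nat \<Rightarrow> trm \<Rightarrow> bool" where
  "realizes_bot N s \<longleftrightarrow> (\<forall>\<pi>. wf_stack N \<pi> \<longrightarrow> in_pole (s, \<pi>))"

end

theory Submission
  imports Defs
begin

lemma ex_step: "step a b \<Longrightarrow> exec b c \<Longrightarrow> exec a c"
  by (rule converse_rtranclp_into_rtranclp)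

lemma num_inj[simp]: "(num i = num j) = (i = j)"
proof (induction i arbitrary: j)
  case 0 then show ?case by (cases j) (auto simp: sigma_def)
next
  case (Suc i) then show ?case by (cases j) (auto simp: sigma_def)
qed

lemma step_det: "step a b \<Longrightarrow> step a c \<Longrightarrow> b = c"
  by (induction rule: step.induct) (auto elim: step.cases)

definition Gc :: "trm \<Rightarrow> trm" where "Gc M = App (App cB cK) (App (App cC cI) M)"
definition c2 :: trm where "c2 = App cC (App (App cB cC) (App cC cB))"
definition Gapp :: "trm \<Rightarrow> trm \<Rightarrow> trm" where
  "Gapp gs gt = App cC (App cW (App gs (App cC (App gt c2))))"
fun G :: "trm \<Rightarrow> trm \<Rightarrow> trm" where
  "G x (App s t) = Gapp (G x s) (G x t)"
| "G x M = (if M = x then cI else Gc M)"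

lemma Gc_ex: "exec (Gc M, k # x # \<sigma>) (k, M # \<sigma>)"
  unfolding Gc_def
  by (rule ex_step, rule step.intros)+ (rule rtranclp.rtrancl_refl)

lemma c2_ex: "exec (c2, t # s # k # \<sigma>) (k, App s t # \<sigma>)"
  unfolding c2_def
  by (rule ex_step, rule step.intros)+ (rule rtranclp.rtrancl_refl)

lemma G_ex: "(\<And>s t. x \<noteq> App s t) \<Longrightarrow> exec (G x M, k # x # \<sigma>) (k, M # \<sigma>)"
proof (induction x M arbitrary: k \<sigma> rule: G.induct)
  case (1 x s t)
  have a: "exec (G x s, App cC (App (G x t) c2) # x # x # k # \<sigma>) (App cC (App (G x t) c2), s # x # k # \<sigma>)"
    using 1 by blast
  have b: "exec (G x t, c2 # x # s # k # \<sigma>) (c2, t # s # k # \<sigma>)"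
    using 1 by blast
  show ?case unfolding G.simps Gapp_def
    apply (rule ex_step, rule step.intros)+
    apply (rule rtranclp_trans[OF a])
    apply (rule ex_step, rule step.intros)+
    apply (rule rtranclp_trans[OF b])
    by (rule c2_ex)
qed (auto intro: Gc_ex ex_step step.intros)

fun absL :: "trm list \<Rightarrow> trm \<Rightarrow> trm" where
  "absL [] M = M"
| "absL (v # vs) M = App (G v (absL vs M)) cI"

lemma absL_ex: "(\<And>v s t. v \<in> set L \<Longrightarrow> v \<noteq> App s t) \<Longrightarrow> exec (absL L M, L @ \<sigma>) (M, \<sigma>)"
proof (induction L)
  case Nil then show ?case by simp
next
  case (Cons v vs)
  have a: "exec (G v (absL vs M), cI # v # vs @ \<sigma>) (cI, absL vs M # vs @ \<sigma>)"
    using Cons.prems by (intro G_ex) auto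
  show ?case
    apply simp
    apply (rule ex_step, rule step.intros)
    apply (rule rtranclp_trans[OF a])
    apply (rule ex_step, rule step.intros)
    using Cons by auto
qed

definition Ins :: "trm \<Rightarrow> trm \<Rightarrow> trm" where "Ins Y c = App (App cC Y) c"

lemma Ins_foldl_ex: "exec (foldl Ins B L, n # \<sigma>) (B, n # L @ \<sigma>)"
proof (induction L arbitrary: B \<sigma>)
  case Nil then show ?case by simp
next
  case (Cons v vs)
  have a: "exec (foldl Ins (Ins B v) vs, n # \<sigma>) (Ins B v, n # vs @ \<sigma>)" by (rule Cons)
  show ?case
    apply simp
    apply (rule rtranclp_trans[OF a])
    unfolding Ins_def
    by (rule ex_step, rule step.intros)+ (rule rtranclp.rtrancl_refl)
qed

lemma foldl_App_ex: "exec (foldl App x \<tau>, \<sigma>) (x, \<tau> @ \<sigma>)"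
proof (induction \<tau> arbitrary: \<sigma> rule: rev_induct)
  case Nil then show ?case by simp
next
  case (snoc t \<tau>)
  show ?case by simp (rule ex_step, rule step.intros, use snoc in simp)
qed

lemma kont_ex1: "exec (kont \<tau>, x # \<sigma>) (foldl App x \<tau>, [])"
proof (induction \<tau> arbitrary: x)
  case Nil then show ?case by (auto intro: ex_step step.intros)
next
  case (Cons t \<tau>)
  show ?case
    apply (simp add: ell_def)
    apply (rule ex_step, rule step.intros)+
    using Cons by simp
qed

lemma kont_ex: "exec (kont \<tau>, x # \<sigma>) (x, \<tau>)"
  using rtranclp_trans[OF kont_ex1 foldl_App_ex] by simp

fun okv :: "trm set \<Rightarrow> trm \<Rightarrow> bool" where
  "okv V (App s t) = (okv V s \<and> okv V t)"
| "okv V cP = (cP \<in> V)"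
| "okv V (cQ j) = (cQ j \<in> V)"
| "okv V (Big f) = closed_trm (Big f)"
| "okv V _ = True"

lemma okv_closed: "okv {} M \<Longrightarrow> closed_trm M"
  by (induction M) (auto intro: closed_trm.intros)

lemma okv_G: "okv V M \<Longrightarrow> okv (V - {x}) (G x M)"
  by (induction x M rule: G.induct) (auto simp: Gc_def Gapp_def c2_def)

lemma okv_absL: "okv V M \<Longrightarrow> okv (V - set L) (absL L M)"
proof (induction L arbitrary: V)
  case Nil then show ?case by simp
next
  case (Cons v vs)
  have "okv (V - set vs) (absL vs M)" using Cons by blast
  then have "okv (V - set vs - {v}) (G v (absL vs M))" by (rule okv_G)
  moreover have "V - set (v # vs) = V - set vs - {v}" by auto
  ultimately show ?case by simp
qed

definition Lv :: "nat \<Rightarrow> trm list" where "Lv N = cP # map cQ [0..<Suc N]"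

lemma wf_okv: "wf_trm N M \<Longrightarrow> okv (set (Lv N)) M"
  by (induction rule: wf_trm.induct) (auto simp: Lv_def intro: closed_trm.intros)

lemma wf_App_iff[simp]: "wf_trm N (App s t) = (wf_trm N s \<and> wf_trm N t)"
  by (auto elim: wf_trm.cases intro: wf_trm.intros)

lemma wf_G: "wf_trm N M \<Longrightarrow> wf_trm N (G x M)"
  by (induction x M rule: G.induct) (auto simp: Gc_def Gapp_def c2_def intro: wf_trm.intros)

lemma wf_absL: "wf_trm N M \<Longrightarrow> wf_trm N (absL L M)"
  by (induction L) (auto intro: wf_G wf_trm.intros)

lemma wf_Lv: "v \<in> set (Lv N) \<Longrightarrow> wf_trm N v"
  by (auto simp: Lv_def intro: wf_trm.intros)

lemma Lv_notApp: "v \<in> set (Lv N) \<Longrightarrow> v \<noteq> App s t"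
  by (auto simp: Lv_def)

definition zeta :: "nat \<Rightarrow> (nat \<Rightarrow> trm) \<Rightarrow> nat \<Rightarrow> trm" where
  "zeta N \<xi> i = absL (Lv N) (\<xi> i)"

definition phi :: "nat \<Rightarrow> (nat \<Rightarrow> trm) \<Rightarrow> trm" where
  "phi N \<xi> = foldl Ins (Big (zeta N \<xi>)) (Lv N)"

lemma wf_zeta: "wf_trm N (\<xi> i) \<Longrightarrow> wf_trm N (zeta N \<xi> i) \<and> closed_trm (zeta N \<xi> i)"
  unfolding zeta_def
  using okv_absL[OF wf_okv, of N "\<xi> i" "Lv N"]
  by (auto intro: wf_absL okv_closed)

lemma wf_foldl_Ins: "wf_trm N B \<Longrightarrow> \<forall>v\<in>set L. wf_trm N v \<Longrightarrow> wf_trm N (foldl Ins B L)"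
proof (induction L arbitrary: B)
  case (Cons a L)
  have "wf_trm N (Ins B a)" using Cons.prems by (simp add: Ins_def wf_trm.intros)
  then show ?case using Cons by simp
qed simp

lemma wf_phi: "(\<And>i. wf_trm N (\<xi> i)) \<Longrightarrow> wf_trm N (phi N \<xi>)"
  unfolding phi_def
proof (rule wf_foldl_Ins)
  assume h: "\<And>i. wf_trm N (\<xi> i)"
  show "wf_trm N (Big (zeta N \<xi>))" by (rule wf_trm.intros(11)) (rule wf_zeta[OF h])
qed (auto intro: wf_Lv)

lemma phi_red: "exec (App (phi N \<xi>) (num i), \<sigma>) (\<xi> i, \<sigma>)"
proof -
  have a: "exec (phi N \<xi>, num i # \<sigma>) (Big (zeta N \<xi>), num i # Lv N @ \<sigma>)"
    unfolding phi_def by (rule Ins_foldl_ex)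
  have b: "exec (zeta N \<xi> i, Lv N @ \<sigma>) (\<xi> i, \<sigma>)"
    unfolding zeta_def by (rule absL_ex) (auto dest: Lv_notApp)
  show ?thesis
    apply (rule ex_step, rule step.intros)
    apply (rule rtranclp_trans[OF a])
    apply (rule ex_step, rule step.intros)
    by (rule b)
qed


definition idxok :: "nat \<Rightarrow> trm \<times> trm list \<Rightarrow> bool" where
  "idxok k c \<longleftrightarrow> (\<forall>f t \<sigma>. c = (Big f, t # \<sigma>) \<longrightarrow> (\<exists>i<k. t = num i))"

inductive reachP :: "nat \<Rightarrow> nat \<Rightarrow> trm \<times> trm list \<Rightarrow> bool" for k where
  rdone: "reachP k 0 (cP, \<rho>)"
| rstep: "step c d \<Longrightarrow> reachP k n d \<Longrightarrow> idxok k c \<Longrightarrow> reachP k (Suc n) c"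

lemma no_step_P: "\<not> step (cP, \<rho>) d"
  by (auto elim: step.cases)

lemma reach_step: "reachP k n c \<Longrightarrow> step c d \<Longrightarrow> \<exists>m. n = Suc m \<and> reachP k m d"
  by (induction rule: reachP.cases) (auto simp: no_step_P dest: step_det)

lemma reach_exec: "exec c d \<Longrightarrow> reachP k n c \<Longrightarrow> \<exists>m\<le>n. reachP k m d"
proof (induction rule: rtranclp_induct)
  case base then show ?case by auto
next
  case (step d e)
  then obtain m where "m \<le> n" "reachP k m d" by blast
  then obtain m' where "m = Suc m'" "reachP k m' e" using reach_step[OF _ step(2)] by blast
  then show ?case using \<open>m \<le> n\<close> by (intro exI[of _ m']) auto
qed

lemma reach_Big: "reachP k n (Big f, t # \<sigma>) \<Longrightarrow> \<exists>i<k. t = num i \<and> (\<exists>m. n = Suc m \<and> reachP k m (f i, \<sigma>))"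
proof -
  assume a: "reachP k n (Big f, t # \<sigma>)"
  from a obtain d m where rstep: "n = Suc m" "step (Big f, t # \<sigma>) d" "reachP k m d" "idxok k (Big f, t # \<sigma>)"
    by (cases rule: reachP.cases) auto
  then obtain i where i: "i < k" "t = num i" unfolding idxok_def by blast
  then have "step (Big f, t # \<sigma>) (f i, \<sigma>)" by (simp add: step.Big)
  then have "d = (f i, \<sigma>)" using rstep step_det by blast
  then show ?thesis using i rstep by blast
qed

lemma idxok_mono: "idxok k c \<Longrightarrow> k \<le> k' \<Longrightarrow> idxok k' c"
  unfolding idxok_def by (metis less_le_trans)

lemma reach_mono: "reachP k n c \<Longrightarrow> k \<le> k' \<Longrightarrow> reachP k' n c"
  by (induction rule: reachP.induct) (auto intro: reachP.intros idxok_mono)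

lemma step_idxok: "step c d \<Longrightarrow> \<exists>k0. idxok k0 c"
proof (cases "\<exists>f t \<sigma>. c = (Big f, t # \<sigma>)")
  case True
  then obtain f t \<sigma> where c: "c = (Big f, t # \<sigma>)" by blast
  assume "step c d"
  then obtain n where "t = num n" unfolding c by (auto elim: step.cases)
  then have "idxok (Suc n) c" unfolding idxok_def c by auto
  then show ?thesis by blast
next
  case False then show ?thesis unfolding idxok_def by blast
qed

lemma reach_exists: "exec c (cP, \<rho>) \<Longrightarrow> \<exists>k n. reachP k n c"
proof (induction rule: converse_rtranclp_induct)
  case base then show ?case by (auto intro: rdone)
next
  case (step c d)
  then obtain k n where r: "reachP k n d" by blast
  obtain k0 where "idxok k0 c" using step_idxok[OF step(1)] by blast
  have "idxok (max k k0) c" by (rule idxok_mono[OF \<open>idxok k0 c\<close>]) simp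
  then have "reachP (max k k0) (Suc n) c"
    using step(1) reach_mono[OF r, of "max k k0"] by (intro rstep) auto
  then show ?case by blast
qed

lemma phi_eq: "phi N \<xi> = Ins (foldl Ins (Big (zeta N \<xi>)) (cP # map cQ [0..<N])) (cQ N)"
  by (simp add: phi_def Lv_def)

lemma phi_macro:
  assumes "reachP k n (phi N \<xi>, \<rho>)"
  shows "\<exists>i \<rho>0 m. \<rho> = num i # \<rho>0 \<and> i < k \<and> m < n \<and> reachP k m (\<xi> i, \<rho>0)"
proof (cases \<rho>)
  case Nil
  define Y where "Y = foldl Ins (Big (zeta N \<xi>)) (cP # map cQ [0..<N])"
  have "exec (phi N \<xi>, []) (cC, [Y, cQ N])"
    unfolding phi_eq Y_def[symmetric] Ins_def
    by (rule ex_step, rule step.intros)+ (rule rtranclp.rtrancl_refl)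
  then obtain m where "reachP k m (cC, [Y, cQ N])" using reach_exec assms Nil by blast
  then show ?thesis by (cases rule: reachP.cases) (auto elim: step.cases)
next
  case (Cons t \<rho>0)
  have "exec (phi N \<xi>, t # \<rho>0) (Big (zeta N \<xi>), t # Lv N @ \<rho>0)"
    unfolding phi_def by (rule Ins_foldl_ex)
  then obtain m2 where m2: "m2 \<le> n" "reachP k m2 (Big (zeta N \<xi>), t # Lv N @ \<rho>0)"
    using reach_exec assms Cons by blast
  then obtain i m3 where i: "i < k" "t = num i" "m2 = Suc m3" "reachP k m3 (zeta N \<xi> i, Lv N @ \<rho>0)"
    using reach_Big by blast
  have "exec (zeta N \<xi> i, Lv N @ \<rho>0) (\<xi> i, \<rho>0)"
    unfolding zeta_def by (rule absL_ex) (auto dest: Lv_notApp)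
  then obtain m4 where "m4 \<le> m3" "reachP k m4 (\<xi> i, \<rho>0)" using reach_exec i by blast
  then show ?thesis using i m2 Cons by (intro exI[of _ i] exI[of _ \<rho>0] exI[of _ m4]) auto
qed

fun pure :: "trm \<Rightarrow> bool" where
  "pure (App s t) = (pure s \<and> pure t)"
| "pure cA = False"
| "pure (Big f) = False"
| "pure _ = True"

lemma pure_foldl: "pure (foldl Ins B L) \<Longrightarrow> pure B"
proof (induction L arbitrary: B)
  case (Cons a L)
  then have "pure (Ins B a)" by simp
  then show ?case by (simp add: Ins_def)
qed simp

lemma pure_phi: "\<not> pure (phi N \<xi>)"
  unfolding phi_def using pure_foldl by fastforce

lemma pure_num: "pure (num i)"
  by (induction i) (auto simp: sigma_def)

inductive rel :: "trm \<Rightarrow> trm \<Rightarrow> trm \<Rightarrow> trm \<Rightarrow> bool" for \<phi> \<psi> where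
  rrefl: "rel \<phi> \<psi> t t"
| rapp: "rel \<phi> \<psi> s s' \<Longrightarrow> rel \<phi> \<psi> u u' \<Longrightarrow> rel \<phi> \<psi> (App s u) (App s' u')"
| rphi: "rel \<phi> \<psi> \<phi> \<psi>"
| rka: "rel \<phi> \<psi> cA (kont \<tau>)"

lemma rel_pure: "rel \<phi> \<psi> t t' \<Longrightarrow> pure t \<Longrightarrow> \<not> pure \<phi> \<Longrightarrow> t' = t"
  by (induction rule: rel.induct) auto

lemma rel_kont: "list_all2 (rel \<phi> \<psi>) \<rho> \<rho>' \<Longrightarrow> rel \<phi> \<psi> (kont \<rho>) (kont (\<rho>' @ \<tau>))"
proof (induction rule: list_all2_induct)
  case Nil then show ?case by (simp add: rka)
next
  case (Cons x xs y ys)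
  then show ?case by (simp add: ell_def rapp rrefl)
qed

lemma rel_gen: "rel \<phi> \<psi> t t' \<Longrightarrow> \<not> (t = \<phi> \<and> t' = \<psi>) \<Longrightarrow>
   t' = t \<or> (\<exists>s u s' u'. t = App s u \<and> t' = App s' u' \<and> rel \<phi> \<psi> s s' \<and> rel \<phi> \<psi> u u')
   \<or> (t = cA \<and> (\<exists>\<tau>. t' = kont \<tau>))"
  by (cases rule: rel.cases) auto


lemma gen_sim:
  assumes st: "step (t, \<rho>) d" and r: "rel \<phi> \<psi> t t'" and l: "list_all2 (rel \<phi> \<psi>) \<rho> \<rho>'"
    and nphi: "\<not> (t = \<phi> \<and> t' = \<psi>)" and np: "\<not> pure \<phi>"
  shows "\<exists>t'' \<rho>'' \<tau>''. exec (t', \<rho>' @ \<tau>) (t'', \<rho>'' @ \<tau>'') \<and> rel \<phi> \<psi> (fst d) t''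
            \<and> list_all2 (rel \<phi> \<psi>) (snd d) \<rho>''"
proof -
  have g: "t' = t \<or> (\<exists>s u s' u'. t = App s u \<and> t' = App s' u' \<and> rel \<phi> \<psi> s s' \<and> rel \<phi> \<psi> u u')
   \<or> (t = cA \<and> (\<exists>\<tau>. t' = kont \<tau>))" using rel_gen[OF r nphi] .
  have pu: "pure t \<Longrightarrow> t' = t" using rel_pure[OF r _ np] by blast
  from st show ?thesis
  proof (cases rule: step.cases)
    case (push s u)
    from g show ?thesis
    proof (elim disjE exE conjE)
      assume "t' = t"
      then show ?thesis using push l
        by (intro exI[of _ s] exI[of _ "u # \<rho>'"] exI[of _ \<tau>])
           (auto intro: ex_step step.intros rrefl)
    next
      fix s1 u1 s' u' assume h: "t = App s1 u1" "t' = App s' u'" "rel \<phi> \<psi> s1 s'" "rel \<phi> \<psi> u1 u'"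
      then show ?thesis using push l
        by (intro exI[of _ s'] exI[of _ "u' # \<rho>'"] exI[of _ \<tau>])
           (auto intro: ex_step step.intros)
    next
      assume "t = cA" then show ?thesis using push by simp
    qed
  next
    case (B x y z \<pi>)
    then obtain x' y' z' \<pi>' where "\<rho>' = x' # y' # z' # \<pi>'" "rel \<phi> \<psi> x x'" "rel \<phi> \<psi> y y'"
      "rel \<phi> \<psi> z z'" "list_all2 (rel \<phi> \<psi>) \<pi> \<pi>'" using l by (auto simp: list_all2_Cons1)
    then show ?thesis using B pu
      by (intro exI[of _ x'] exI[of _ "App y' z' # \<pi>'"] exI[of _ \<tau>])
         (auto intro: ex_step step.intros rapp)
  next
    case (C x y z \<pi>)
    then obtain x' y' z' \<pi>' where "\<rho>' = x' # y' # z' # \<pi>'" "rel \<phi> \<psi> x x'" "rel \<phi> \<psi> y y'"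
      "rel \<phi> \<psi> z z'" "list_all2 (rel \<phi> \<psi>) \<pi> \<pi>'" using l by (auto simp: list_all2_Cons1)
    then show ?thesis using C pu
      by (intro exI[of _ x'] exI[of _ "z' # y' # \<pi>'"] exI[of _ \<tau>])
         (auto intro: ex_step step.intros)
  next
    case (I x \<pi>)
    then obtain x' \<pi>' where "\<rho>' = x' # \<pi>'" "rel \<phi> \<psi> x x'"
      "list_all2 (rel \<phi> \<psi>) \<pi> \<pi>'" using l by (auto simp: list_all2_Cons1)
    then show ?thesis using I pu
      by (intro exI[of _ x'] exI[of _ "\<pi>'"] exI[of _ \<tau>])
         (auto intro: ex_step step.intros)
  next
    case (K x y \<pi>)
    then obtain x' y' \<pi>' where "\<rho>' = x' # y' # \<pi>'" "rel \<phi> \<psi> x x'"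
      "list_all2 (rel \<phi> \<psi>) \<pi> \<pi>'" using l by (auto simp: list_all2_Cons1)
    then show ?thesis using K pu
      by (intro exI[of _ x'] exI[of _ "\<pi>'"] exI[of _ \<tau>])
         (auto intro: ex_step step.intros)
  next
    case (W x y \<pi>)
    then obtain x' y' \<pi>' where "\<rho>' = x' # y' # \<pi>'" "rel \<phi> \<psi> x x'" "rel \<phi> \<psi> y y'"
      "list_all2 (rel \<phi> \<psi>) \<pi> \<pi>'" using l by (auto simp: list_all2_Cons1)
    then show ?thesis using W pu
      by (intro exI[of _ x'] exI[of _ "y' # y' # \<pi>'"] exI[of _ \<tau>])
         (auto intro: ex_step step.intros)
  next
    case (cc x \<pi>)
    then obtain x' \<pi>' where "\<rho>' = x' # \<pi>'" "rel \<phi> \<psi> x x'"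
      "list_all2 (rel \<phi> \<psi>) \<pi> \<pi>'" using l by (auto simp: list_all2_Cons1)
    then show ?thesis using cc pu rel_kont[of \<phi> \<psi> \<pi> \<pi>' \<tau>]
      by (intro exI[of _ x'] exI[of _ "kont (\<pi>' @ \<tau>) # \<pi>'"] exI[of _ \<tau>])
         (auto intro: ex_step step.intros)
  next
    case (A x \<pi>)
    then obtain x' \<pi>' where xs: "\<rho>' = x' # \<pi>'" "rel \<phi> \<psi> x x'"
      using l by (auto simp: list_all2_Cons1)
    from g show ?thesis
    proof (elim disjE exE conjE)
      assume "t' = t"
      then show ?thesis using A xs
        by (intro exI[of _ x'] exI[of _ "[]"] exI[of _ "[]"])
           (auto intro: ex_step step.intros)
    next
      fix s1 u1 s' u' assume "t = App s1 u1" then show ?thesis using A by simp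
    next
      fix \<tau>1 assume "t' = kont \<tau>1"
      then have "exec (t', \<rho>' @ \<tau>) (x', \<tau>1)" using xs kont_ex by simp
      then show ?thesis using A xs
        by (intro exI[of _ x'] exI[of _ "[]"] exI[of _ \<tau>1]) auto
    qed
  next
    case (Big f n \<pi>)
    then obtain y \<pi>' where "\<rho>' = y # \<pi>'" "rel \<phi> \<psi> (num n) y"
      "list_all2 (rel \<phi> \<psi>) \<pi> \<pi>'" using l by (auto simp: list_all2_Cons1)
    moreover have "y = num n" using rel_pure[OF \<open>rel \<phi> \<psi> (num n) y\<close> pure_num np] .
    moreover have "t' = t" using g Big by auto
    ultimately show ?thesis using Big
      by (intro exI[of _ "f n"] exI[of _ "\<pi>'"] exI[of _ \<tau>])
         (auto intro: ex_step step.intros rrefl)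
  qed
qed

lemma wf_kont: "wf_stack N \<pi> \<Longrightarrow> wf_trm N (kont \<pi>)"
  by (induction \<pi>) (auto simp: wf_stack_def ell_def intro: wf_trm.intros)

lemma wf_Big: "wf_trm N (Big f) \<Longrightarrow> wf_trm N (f n)"
  by (auto elim: wf_trm.cases)

lemma wf_step: "step c d \<Longrightarrow> wf_trm N (fst c) \<Longrightarrow> wf_stack N (snd c) \<Longrightarrow>
   wf_trm N (fst d) \<and> wf_stack N (snd d)"
  by (induction rule: step.induct) (auto simp: wf_stack_def wf_Big intro: wf_kont[unfolded wf_stack_def])

lemma wf_exec: "exec c d \<Longrightarrow> wf_trm N (fst c) \<Longrightarrow> wf_stack N (snd c) \<Longrightarrow>
   wf_trm N (fst d) \<and> wf_stack N (snd d)"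
  by (induction rule: rtranclp_induct) (auto dest: wf_step)

lemma exec_det: "exec a b \<Longrightarrow> step a a1 \<Longrightarrow> a \<noteq> b \<Longrightarrow> exec a1 b"
  by (induction rule: converse_rtranclp_induct) (auto dest: step_det)


lemma sim:
  assumes H1: "\<And>\<rho> n. reachP k n (\<phi>, \<rho>) \<Longrightarrow> \<exists>i \<rho>0 m. \<rho> = num i # \<rho>0 \<and> i < k \<and> m < n \<and> reachP k m (\<xi> i, \<rho>0)"
    and H2: "\<And>i. i < k \<Longrightarrow> red_trm N (App \<psi> (num i)) (\<xi> i)"
    and np: "\<not> pure \<phi>" and wx: "\<And>i. wf_trm N (\<xi> i)"
  shows "reachP k n (t, \<rho>) \<Longrightarrow> rel \<phi> \<psi> t t' \<Longrightarrow> list_all2 (rel \<phi> \<psi>) \<rho> \<rho>' \<Longrightarrow>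
    wf_trm N t' \<Longrightarrow> wf_stack N (\<rho>' @ \<tau>) \<Longrightarrow> in_pole (t', \<rho>' @ \<tau>)"
proof (induction n arbitrary: t \<rho> t' \<rho>' \<tau> rule: less_induct)
  case (less n)
  show ?case
  proof (cases "t = \<phi> \<and> t' = \<psi>")
    case True
    then obtain i \<rho>0 m where h: "\<rho> = num i # \<rho>0" "i < k" "m < n" "reachP k m (\<xi> i, \<rho>0)"
      using H1 less.prems(1) by blast
    then obtain y \<rho>0' where y: "\<rho>' = y # \<rho>0'" "rel \<phi> \<psi> (num i) y" "list_all2 (rel \<phi> \<psi>) \<rho>0 \<rho>0'"
      using less.prems(3) by (auto simp: list_all2_Cons1)
    have yn: "y = num i" using rel_pure[OF y(2) pure_num np] .
    have ws: "wf_stack N (\<rho>0' @ \<tau>)" using less.prems(5) y by (simp add: wf_stack_def)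
    have "in_pole (\<xi> i, \<rho>0' @ \<tau>)"
      using less.IH[OF h(3) h(4) rrefl y(3) wx ws] .
    then obtain r where r: "exec (\<xi> i, \<rho>0' @ \<tau>) (cP, r)" unfolding in_pole_def by blast
    have "exec (App \<psi> (num i), \<rho>0' @ \<tau>) (\<xi> i, \<rho>0' @ \<tau>)"
      using H2[OF h(2)] ws unfolding red_trm_def by blast
    then have "exec (App \<psi> (num i), \<rho>0' @ \<tau>) (cP, r)" using r by simp
    then have "exec (\<psi>, num i # \<rho>0' @ \<tau>) (cP, r)"
      by (rule exec_det) (auto intro: step.intros)
    then show ?thesis using True y yn unfolding in_pole_def by auto
  next
    case False
    from less.prems(1) show ?thesis
    proof (cases rule: reachP.cases)
      case rdone
      then have "t' = cP" using rel_pure[OF less.prems(2) _ np] by simp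
      then show ?thesis unfolding in_pole_def by blast
    next
      case (rstep d m)
      obtain t'' \<rho>'' \<tau>'' where g: "exec (t', \<rho>' @ \<tau>) (t'', \<rho>'' @ \<tau>'')" "rel \<phi> \<psi> (fst d) t''"
        "list_all2 (rel \<phi> \<psi>) (snd d) \<rho>''"
        using gen_sim[OF rstep(2) less.prems(2) less.prems(3) False np] by blast
      have w: "wf_trm N t'' \<and> wf_stack N (\<rho>'' @ \<tau>'')"
        using wf_exec[OF g(1)] less.prems(4,5) by simp
      have "reachP k m (fst d, snd d)" using rstep by simp
      then have "in_pole (t'', \<rho>'' @ \<tau>'')"
        using less.IH[of m] rstep g w by blast
      then show ?thesis using g(1) unfolding in_pole_def by (meson rtranclp_trans)
    qed
  qed
qed

theorem theorem2:
  fixes N :: nat and \<xi> :: "nat \<Rightarrow> trm"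
  assumes "\<And>i. wf_trm N (\<xi> i)"
  shows "\<exists>\<phi>. wf_trm N \<phi>
     \<and> (\<forall>i. red_trm N (App \<phi> (num i)) (\<xi> i))
     \<and> (\<forall>U. wf_trm N U \<and> realizes_bot N (App U \<phi>) \<longrightarrow>
          (\<exists>k. \<forall>\<psi>. wf_trm N \<psi> \<and> (\<forall>i<k. red_trm N (App \<psi> (num i)) (\<xi> i))
                 \<longrightarrow> realizes_bot N (App U \<psi>)))"
proof (intro exI[of _ "phi N \<xi>"] conjI allI impI)
  show "wf_trm N (phi N \<xi>)" using wf_phi assms by blast
  fix i show "red_trm N (App (phi N \<xi>) (num i)) (\<xi> i)"
    unfolding red_trm_def using phi_red by blast
next
  fix U assume U: "wf_trm N U \<and> realizes_bot N (App U (phi N \<xi>))"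
  then have "in_pole (App U (phi N \<xi>), [])" unfolding realizes_bot_def wf_stack_def by simp
  then obtain r where "exec (App U (phi N \<xi>), []) (cP, r)" unfolding in_pole_def by blast
  then obtain k n where kn: "reachP k n (App U (phi N \<xi>), [])" using reach_exists by blast
  show "\<exists>k. \<forall>\<psi>. wf_trm N \<psi> \<and> (\<forall>i<k. red_trm N (App \<psi> (num i)) (\<xi> i))
                 \<longrightarrow> realizes_bot N (App U \<psi>)"
  proof (intro exI[of _ k] allI impI)
    fix \<psi> assume \<psi>: "wf_trm N \<psi> \<and> (\<forall>i<k. red_trm N (App \<psi> (num i)) (\<xi> i))"
    show "realizes_bot N (App U \<psi>)" unfolding realizes_bot_def
    proof (intro allI impI)
      fix \<pi> assume \<pi>: "wf_stack N \<pi>"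
      have "in_pole (App U \<psi>, [] @ \<pi>)"
        apply (rule sim[of k "phi N \<xi>" \<xi> N \<psi>, OF _ _ _ _ kn])
        using phi_macro \<psi> pure_phi assms U \<pi>
        by (auto intro: rapp rrefl rphi)
      then show "in_pole (App U \<psi>, \<pi>)" by simp
    qed
  qed
qed

end
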